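(* For every finite nonempty set $V$ of nails and every $k$ with $1 \le k \le |V|$, every word $H_k(V)$ produced by the following recursive construction solves the specification $\kappa_k(V)$ defined by $\kappa_k(V)(S) = \mathsf{fall} \iff |S| \ge k$ (i.e.\ $H_k(V)|_S = 0 \iff |S| \ge k$ for all $S \subseteq V$). Construction: if $|V| = 1$ (so $k=1$), $H_1(V)$ is the single generator. If $|V| \ge 2$, choose any split $V = L \sqcup R$ with $n_1 = |L| \ge 1$, $n_2 = |R| \ge 1$; for each feasible $j$, i.e.\ $\max(0, k-n_2) \le j \le \min(k, n_1)$, form \[ D_j = \begin{cases} H_k(R), & j = 0,\\ H_j(L) + H_{k-j}(R), & 0 < j < k,\\ H_k(L), & j = k,\end{cases} \] where the words $H_\cdot(L)$, $H_\cdot(R)$ are produced recursively by the same construction; then let $H_k(V)$ be the value of any commutator tree whose leaves are the words $D_j$, each feasible $j$ used exactly once (for instance the tree obtained by Huffman placement, repeatedly combining the two currently shortest subexpressions into a commutator).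
   Context: Words are elements of the free group $F(V)$ on a finite set $V$ of nails, written additively ($+$ group operation, $-$ inverse, $0$ identity); the commutator is $[a,b] = a + b - a - b$. A commutator tree is a finite rooted binary tree with leaves labelled by words, whose value is computed by taking the commutator of the values of the two children at each internal node. For $S \subseteq V$, $h|_S$ is the image of $h$ under the homomorphism killing the generators in $S$. A word $h$ solves a specification $f: 2^V \to \{\mathsf{hang},\mathsf{fall}\}$ if $h|_S = 0 \iff f(S)=\mathsf{fall}$ for all $S\subseteq V$. Solving $\kappa_k(V)$ with $V=\{1,\dots,n\}$ is the same as solving the $k$-out-of-$n$ picture-hanging puzzle: the word is nonzero, removing any $k$ nails makes it $0$, removing fewer leaves it nonzero. *)

theory Defs
  imports Main "HOL-Library.Multiset"
begin

text \<open>Elements of the free group F(V) are represented by (not necessarily reduced)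
words: lists of letters (x, True) = generator x, (x, False) = its inverse.
The group operation is concatenation, the inverse reverses and flips signs,
and a word represents the identity 0 iff it freely reduces to the empty word.\<close>

type_synonym 'a fword = "('a \<times> bool) list"

definition fg_neg :: "'a fword \<Rightarrow> 'a fword" where
  "fg_neg w = rev (map (\<lambda>(x, b). (x, \<not> b)) w)"

definition fg_comm :: "'a fword \<Rightarrow> 'a fword \<Rightarrow> 'a fword" where
  "fg_comm a b = a @ b @ fg_neg a @ fg_neg b"

inductive cancel1 :: "'a fword \<Rightarrow> 'a fword \<Rightarrow> bool" where
  "cancel1 (xs @ [(x, b), (x, \<not> b)] @ ys) (xs @ ys)"

definition fg_is_zero :: "'a fword \<Rightarrow> bool" where
  "fg_is_zero w \<longleftrightarrow> cancel1\<^sup>*\<^sup>* w []"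

text \<open>h|_S: image under the homomorphism killing the generators in S.\<close>
definition restrict_word :: "'a set \<Rightarrow> 'a fword \<Rightarrow> 'a fword" where
  "restrict_word S w = filter (\<lambda>(x, _). x \<notin> S) w"

datatype 'b ctree = Leaf 'b | Node "'b ctree" "'b ctree"

fun ct_leaves :: "'b ctree \<Rightarrow> 'b list" where
  "ct_leaves (Leaf x) = [x]"
| "ct_leaves (Node l r) = ct_leaves l @ ct_leaves r"

fun ct_value :: "('b \<Rightarrow> 'a fword) \<Rightarrow> 'b ctree \<Rightarrow> 'a fword" where
  "ct_value D (Leaf x) = D x"
| "ct_value D (Node l r) = fg_comm (ct_value D l) (ct_value D r)"

text \<open>hword V k w: w is a word that the recursive construction can produce as H_k(V)
(for some choice of splits, of recursive words, and of commutator trees).\<close>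
inductive hword :: "'a set \<Rightarrow> nat \<Rightarrow> 'a fword \<Rightarrow> bool" where
  base: "hword {v} 1 [(v, True)]"
| split: "\<lbrakk> finite L; finite R; L \<noteq> {}; R \<noteq> {}; L \<inter> R = {};
           1 \<le> k; k \<le> card L + card R;
           \<forall>j. k - card R \<le> j \<and> j \<le> min k (card L) \<longrightarrow>
              ((j = 0 \<and> hword R k (D j))
               \<or> (0 < j \<and> j < k \<and> (\<exists>a b. hword L j a \<and> hword R (k - j) b \<and> D j = a @ b))
               \<or> (j = k \<and> hword L k (D j)));
           mset (ct_leaves t) = mset [k - card R ..< min k (card L) + 1] \<rbrakk>
         \<Longrightarrow> hword (L \<union> R) k (ct_value D t)"

end

theory Submission
  imports Defs "HOL-Library.Infinite_Set"
begin

definition linv :: "'a \<times> bool \<Rightarrow> 'a \<times> bool" where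
  "linv p = (fst p, \<not> snd p)"

lemma linv_linv[simp]: "linv (linv p) = p" by (simp add: linv_def)
lemma linv_neq[simp]: "linv p \<noteq> p" by (cases p) (simp add: linv_def)
lemma linv_neq'[simp]: "p \<noteq> linv p" by (cases p) (simp add: linv_def)
lemma linv_eq_iff[simp]: "linv p = linv q \<longleftrightarrow> p = q" by (metis linv_linv)
lemma fst_linv[simp]: "fst (linv p) = fst p" by (simp add: linv_def)
lemma snd_linv[simp]: "snd (linv p) = (\<not> snd p)" by (simp add: linv_def)

lemma fg_neg_alt: "fg_neg w = rev (map linv w)"
  unfolding fg_neg_def linv_def by (induction w) auto

lemma fg_neg_Nil[simp]: "fg_neg [] = []" by (simp add: fg_neg_alt)
lemma fg_neg_Cons[simp]: "fg_neg (x # w) = fg_neg w @ [linv x]" by (simp add: fg_neg_alt)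
lemma fg_neg_append[simp]: "fg_neg (a @ b) = fg_neg b @ fg_neg a" by (simp add: fg_neg_alt)
lemma fg_neg_neg[simp]: "fg_neg (fg_neg a) = a" by (simp add: fg_neg_alt rev_map comp_def)
lemma fg_neg_empty_iff[simp]: "fg_neg a = [] \<longleftrightarrow> a = []" by (simp add: fg_neg_alt)

fun rd :: "'a fword \<Rightarrow> 'a fword" where
  "rd [] = []"
| "rd (x # xs) = (case rd xs of [] \<Rightarrow> [x] | y # ys \<Rightarrow> if y = linv x then ys else x # y # ys)"

fun reduced :: "'a fword \<Rightarrow> bool" where
  "reduced [] = True"
| "reduced [x] = True"
| "reduced (x # y # ys) = (y \<noteq> linv x \<and> reduced (y # ys))"

lemma reduced_tl: "reduced (x # ys) \<Longrightarrow> reduced ys"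
  by (cases ys) auto

lemma reduced_rd: "reduced (rd w)"
  by (induction w) (auto split: list.splits dest: reduced_tl)

lemma rd_reduced: "reduced w \<Longrightarrow> rd w = w"
  by (induction w rule: reduced.induct) auto

lemma rd_rd[simp]: "rd (rd w) = rd w"
  by (simp add: rd_reduced reduced_rd)

lemma rd_append_rd: "rd (xs @ rd ys) = rd (xs @ ys)"
  by (induction xs) auto

lemma rd_cancel: "rd (p # linv p # ys) = rd ys"
proof -
  have r: "reduced (rd ys)" by (rule reduced_rd)
  show ?thesis
  proof (cases "rd ys")
    case Nil then show ?thesis by simp
  next
    case (Cons y zs)
    show ?thesis
    proof (cases "y = p")
      case True
      with Cons r have "zs = [] \<or> hd zs \<noteq> linv p"
        by (cases zs) auto
      then show ?thesis using Cons True
        by (cases zs) auto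
    next
      case False
      then show ?thesis using Cons by auto
    qed
  qed
qed

lemma cancel1_rd: "cancel1 w w' \<Longrightarrow> rd w = rd w'"
proof (induction rule: cancel1.induct)
  case (1 xs x b ys)
  have "rd (xs @ [(x, b), (x, \<not> b)] @ ys) = rd (xs @ rd ((x, b) # linv (x, b) # ys))"
    by (simp only: rd_append_rd linv_def fst_conv snd_conv append.simps)
  also have "\<dots> = rd (xs @ rd ys)" by (simp only: rd_cancel)
  finally show ?case by (simp add: rd_append_rd)
qed

lemma cancels_rd: "cancel1\<^sup>*\<^sup>* w w' \<Longrightarrow> rd w = rd w'"
  by (induction rule: rtranclp_induct) (auto dest: cancel1_rd)

lemma cancel1_ctx: "cancel1 w w' \<Longrightarrow> cancel1 (u @ w @ v) (u @ w' @ v)"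
proof (induction rule: cancel1.induct)
  case (1 xs x b ys)
  have "cancel1 ((u @ xs) @ [(x, b), (x, \<not> b)] @ (ys @ v)) ((u @ xs) @ (ys @ v))"
    by (rule cancel1.intros)
  then show ?case by simp
qed

lemma cancels_ctx: "cancel1\<^sup>*\<^sup>* w w' \<Longrightarrow> cancel1\<^sup>*\<^sup>* (u @ w @ v) (u @ w' @ v)"
  by (induction rule: rtranclp_induct) (auto intro: rtranclp.rtrancl_into_rtrancl cancel1_ctx)

lemma cancel_pair: "cancel1 (p # linv p # ys) ys"
proof -
  have "cancel1 ([] @ [(fst p, snd p), (fst p, \<not> snd p)] @ ys) ([] @ ys)"
    by (rule cancel1.intros)
  then show ?thesis by (simp add: linv_def)
qed

lemma cancels_to_rd: "cancel1\<^sup>*\<^sup>* w (rd w)"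
proof (induction w)
  case Nil then show ?case by simp
next
  case (Cons x w)
  have 1: "cancel1\<^sup>*\<^sup>* (x # w) (x # rd w)"
    using cancels_ctx[OF Cons, of "[x]" "[]"] by simp
  show ?case
  proof (cases "rd w")
    case Nil then show ?thesis using 1 by simp
  next
    case (Cons y ys)
    show ?thesis
    proof (cases "y = linv x")
      case True
      then have "cancel1 (x # rd w) ys" using Cons cancel_pair by simp
      then show ?thesis using 1 Cons True by (auto intro: rtranclp.rtrancl_into_rtrancl)
    next
      case False then show ?thesis using 1 Cons by simp
    qed
  qed
qed

lemma zero_iff: "fg_is_zero w \<longleftrightarrow> rd w = []"
proof
  assume "fg_is_zero w"
  then show "rd w = []" unfolding fg_is_zero_def by (auto dest: cancels_rd)
next
  assume "rd w = []"
  then show "fg_is_zero w" unfolding fg_is_zero_def using cancels_to_rd[of w] by simp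
qed

lemma rd_append: "rd (a @ b) = rd (rd a @ rd b)"
proof -
  have "cancel1\<^sup>*\<^sup>* (a @ b) (rd a @ rd b)"
    using cancels_ctx[OF cancels_to_rd[of a], of "[]" b]
          cancels_ctx[OF cancels_to_rd[of b], of "rd a" "[]"]
    by (auto intro: rtranclp_trans)
  then show ?thesis by (rule cancels_rd)
qed

lemma rd_rd_append: "rd (rd a @ b) = rd (a @ b)"
  by (metis rd_append rd_rd)

lemma rd_append_rd2: "rd (a @ rd b) = rd (a @ b)"
  by (rule rd_append_rd)

lemma cancel1_neg: "cancel1 w w' \<Longrightarrow> cancel1 (fg_neg w) (fg_neg w')"
proof (induction rule: cancel1.induct)
  case (1 xs x b ys)
  have "cancel1 (fg_neg ys @ [(x, b), (x, \<not> b)] @ fg_neg xs) (fg_neg ys @ fg_neg xs)"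
    by (rule cancel1.intros)
  then show ?case by (simp add: linv_def)
qed

lemma cancels_neg: "cancel1\<^sup>*\<^sup>* w w' \<Longrightarrow> cancel1\<^sup>*\<^sup>* (fg_neg w) (fg_neg w')"
  by (induction rule: rtranclp_induct) (auto intro: rtranclp.rtrancl_into_rtrancl cancel1_neg)

lemma rd_neg_rd: "rd (fg_neg (rd w)) = rd (fg_neg w)"
  using cancels_rd[OF cancels_neg[OF cancels_to_rd[of w]]] by simp

lemma cancels_inverse: "cancel1\<^sup>*\<^sup>* (w @ fg_neg w) []"
proof (induction w)
  case Nil then show ?case by simp
next
  case (Cons x w)
  have "cancel1\<^sup>*\<^sup>* ([x] @ (w @ fg_neg w) @ [linv x]) ([x] @ [] @ [linv x])"
    by (rule cancels_ctx[OF Cons])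
  moreover have "cancel1 [x, linv x] []" using cancel_pair[of x "[]"] by simp
  ultimately show ?case by (auto intro: rtranclp.rtrancl_into_rtrancl)
qed

lemma rd_inverse[simp]: "rd (w @ fg_neg w) = []"
  using cancels_rd[OF cancels_inverse[of w]] by simp

lemma rd_inverse2[simp]: "rd (fg_neg w @ w) = []"
  using rd_inverse[of "fg_neg w"] by simp

lemma rd_neg_zero: "rd w = [] \<Longrightarrow> rd (fg_neg w) = []"
  by (metis rd_neg_rd fg_neg_Nil rd.simps(1))

lemma rd_cancel_left: "rd (fg_neg c @ c @ r) = rd r"
  by (metis append_assoc rd_append rd_inverse2 append_Nil rd_rd)

lemma rd_cancel_left2: "rd (c @ fg_neg c @ r) = rd r"
  using rd_cancel_left[of "fg_neg c"] by simp

lemma restrict_append[simp]: "restrict_word X (a @ b) = restrict_word X a @ restrict_word X b"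
  by (simp add: restrict_word_def)
lemma restrict_Nil[simp]: "restrict_word X [] = []"
  by (simp add: restrict_word_def)
lemma restrict_Cons: "restrict_word X (x # w) = (if fst x \<in> X then restrict_word X w else x # restrict_word X w)"
  by (cases x) (simp add: restrict_word_def)
lemma restrict_neg: "restrict_word X (fg_neg w) = fg_neg (restrict_word X w)"
  by (induction w) (auto simp: restrict_Cons)
lemma restrict_restrict: "restrict_word X (restrict_word Y w) = restrict_word (X \<union> Y) w"
  by (induction w) (auto simp: restrict_Cons)
lemma restrict_id: "(\<forall>x\<in>set w. fst x \<notin> X) \<Longrightarrow> restrict_word X w = w"
  by (induction w) (auto simp: restrict_Cons)
lemma restrict_comm: "restrict_word X (fg_comm a b) = fg_comm (restrict_word X a) (restrict_word X b)"
  by (simp add: fg_comm_def restrict_neg)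

lemma cancel1_restrict: "cancel1 w w' \<Longrightarrow> cancel1\<^sup>*\<^sup>* (restrict_word X w) (restrict_word X w')"
proof (induction rule: cancel1.induct)
  case (1 xs x b ys)
  show ?case
  proof (cases "x \<in> X")
    case True then show ?thesis by (simp add: restrict_Cons)
  next
    case False
    have "cancel1 (restrict_word X xs @ [(x, b), (x, \<not> b)] @ restrict_word X ys)
                  (restrict_word X xs @ restrict_word X ys)"
      by (rule cancel1.intros)
    then show ?thesis using False by (simp add: restrict_Cons)
  qed
qed

lemma cancels_restrict: "cancel1\<^sup>*\<^sup>* w w' \<Longrightarrow> cancel1\<^sup>*\<^sup>* (restrict_word X w) (restrict_word X w')"
  by (induction rule: rtranclp_induct) (auto intro: rtranclp_trans cancel1_restrict)

lemma rd_restrict_rd: "rd (restrict_word X (rd w)) = rd (restrict_word X w)"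
  using cancels_rd[OF cancels_restrict[OF cancels_to_rd[of w]]] by simp

lemma zero_restrict: "rd w = [] \<Longrightarrow> rd (restrict_word X w) = []"
  by (metis rd_restrict_rd restrict_Nil rd.simps(1))

lemma zero_comm: "rd a = [] \<Longrightarrow> rd (fg_comm a b) = []"
proof -
  assume a: "rd a = []"
  have "rd (fg_comm a b) = rd (rd a @ rd (b @ fg_neg a @ fg_neg b))"
    unfolding fg_comm_def by (simp add: rd_append[of a])
  also have "\<dots> = rd (b @ fg_neg a @ fg_neg b)" using a by simp
  also have "\<dots> = rd (b @ rd (fg_neg a @ fg_neg b))" by (simp add: rd_append_rd)
  also have "rd (fg_neg a @ fg_neg b) = rd (fg_neg b)"
    using rd_append[of "fg_neg a" "fg_neg b"] rd_neg_zero[OF a] by simp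
  also have "rd (b @ rd (fg_neg b)) = []" by (simp add: rd_append_rd)
  finally show ?thesis .
qed

lemma zero_comm2: "rd b = [] \<Longrightarrow> rd (fg_comm a b) = []"
proof -
  assume b: "rd b = []"
  have "fg_comm a b = fg_neg (fg_comm b a)" by (simp add: fg_comm_def)
  then show ?thesis using zero_comm[OF b, of a] rd_neg_zero by metis
qed

lemma reduced_Cons: "reduced (x # ys) \<longleftrightarrow> reduced ys \<and> (ys \<noteq> [] \<longrightarrow> hd ys \<noteq> linv x)"
  by (cases ys) auto

lemma reduced_append: "reduced (xs @ ys) \<longleftrightarrow>
   reduced xs \<and> reduced ys \<and> (xs \<noteq> [] \<longrightarrow> ys \<noteq> [] \<longrightarrow> hd ys \<noteq> linv (last xs))"
proof (induction xs)
  case Nil then show ?case by simp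
next
  case (Cons x xs)
  show ?case
  proof (cases "xs = []")
    case True then show ?thesis by (simp add: reduced_Cons)
  next
    case False then show ?thesis using Cons.IH by (auto simp: reduced_Cons)
  qed
qed

definition pw :: "'a fword \<Rightarrow> nat \<Rightarrow> 'a fword" where
  "pw d n = concat (replicate n d)"

lemma pw_0[simp]: "pw d 0 = []" by (simp add: pw_def)
lemma pw_Suc: "pw d (Suc n) = d @ pw d n" by (simp add: pw_def)
lemma pw_add: "pw d (m + n) = pw d m @ pw d n" by (simp add: pw_def replicate_add)

lemma pw_hd: "s \<noteq> [] \<Longrightarrow> n \<ge> 1 \<Longrightarrow> hd (pw s n) = hd s"
  by (cases n) (auto simp: pw_Suc)
lemma pw_ne: "s \<noteq> [] \<Longrightarrow> n \<ge> 1 \<Longrightarrow> pw s n \<noteq> []"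
  by (cases n) (auto simp: pw_Suc)
lemma pw_last: "s \<noteq> [] \<Longrightarrow> n \<ge> 1 \<Longrightarrow> last (pw s n) = last s"
proof (induction n)
  case 0 then show ?case by simp
next
  case (Suc n)
  show ?case
  proof (cases n)
    case 0 then show ?thesis by (simp add: pw_Suc)
  next
    case (Suc m)
    then show ?thesis using Suc.IH Suc.prems pw_ne[of s n] by (simp add: pw_Suc)
  qed
qed

lemma pw_reduced: "reduced (s @ s) \<Longrightarrow> s \<noteq> [] \<Longrightarrow> n \<ge> 1 \<Longrightarrow> reduced (pw s n)"
proof (induction n)
  case 0 then show ?case by simp
next
  case (Suc n)
  show ?case
  proof (cases n)
    case 0 then show ?thesis using Suc.prems by (simp add: pw_Suc reduced_append)
  next
    case (Suc m)
    then have "reduced (pw s n)" using Suc.IH Suc.prems by simp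
    moreover have "hd (pw s n) = hd s" using pw_hd[of s n] Suc Suc.prems by simp
    ultimately show ?thesis using Suc.prems pw_ne[of s n] Suc
      by (simp add: pw_Suc reduced_append)
  qed
qed

lemma cyc_decomp:
  "reduced d \<Longrightarrow> d \<noteq> [] \<Longrightarrow> \<exists>c s. d = c @ s @ fg_neg c \<and> s \<noteq> [] \<and> reduced (s @ s)"
proof (induction "length d" arbitrary: d rule: less_induct)
  case less
  show ?case
  proof (cases "length d = 1 \<or> last d \<noteq> linv (hd d)")
    case True
    then have "reduced (d @ d)"
    proof
      assume "length d = 1"
      then obtain x where "d = [x]" by (cases d) auto
      then show ?thesis by simp
    next
      assume "last d \<noteq> linv (hd d)"
      then have "hd d \<noteq> linv (last d)" by (metis linv_linv)
      then show ?thesis using less.prems(1) by (simp add: reduced_append)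
    qed
    then have "d = [] @ d @ fg_neg [] \<and> d \<noteq> [] \<and> reduced (d @ d)" using less.prems by simp
    then show ?thesis by blast
  next
    case False
    then have l: "length d \<noteq> 1" and e: "last d = linv (hd d)" by auto
    obtain x d' where d1: "d = x # d'" using less.prems by (cases d) auto
    then have "d' \<noteq> []" using l by auto
    then obtain m y where "d' = m @ [y]" by (metis rev_exhaust)
    with d1 have d: "d = x # m @ [y]" by simp
    have y: "y = linv x" using e d by simp
    have m: "m \<noteq> []"
    proof
      assume "m = []"
      then have "d = [x, linv x]" using d y by simp
      then show False using less.prems(1) by simp
    qed
    have "reduced ((x # m) @ [y])" using less.prems(1) d by simp
    then have "reduced (x # m)" by (simp only: reduced_append)
    then have mr: "reduced m" by (rule reduced_tl)
    have "length m < length d" using d by simp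
    then obtain c s where cs: "m = c @ s @ fg_neg c" "s \<noteq> []" "reduced (s @ s)"
      using less.hyps[OF _ mr m] by blast
    have "d = (x # c) @ s @ fg_neg (x # c)" using d y cs(1) by simp
    then show ?thesis using cs(2,3) by blast
  qed
qed

lemma rd_mid_cancel: "rd (A @ fg_neg c @ c @ B) = rd (A @ B)"
  by (metis rd_append_rd rd_cancel_left)

lemma rd_pw_conj: "n \<ge> 1 \<Longrightarrow> rd (pw (c @ s @ fg_neg c) n) = rd (c @ pw s n @ fg_neg c)"
proof (induction n)
  case 0 then show ?case by simp
next
  case (Suc n)
  show ?case
  proof (cases n)
    case 0 then show ?thesis by (simp add: pw_Suc)
  next
    case (Suc m)
    have "rd (pw (c @ s @ fg_neg c) (Suc n)) = rd ((c @ s @ fg_neg c) @ rd (pw (c @ s @ fg_neg c) n))"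
      unfolding rd_append_rd by (simp add: pw_Suc)
    also have "\<dots> = rd ((c @ s) @ fg_neg c @ c @ (pw s n @ fg_neg c))"
      using Suc.IH Suc rd_append_rd[of "c @ s @ fg_neg c" "c @ pw s n @ fg_neg c"] by simp
    also have "\<dots> = rd ((c @ s) @ (pw s n @ fg_neg c))" by (rule rd_mid_cancel)
    finally show ?thesis by (simp add: pw_Suc)
  qed
qed

lemma torsion_free: "reduced d \<Longrightarrow> d \<noteq> [] \<Longrightarrow> n \<ge> 1 \<Longrightarrow> rd (pw d n) \<noteq> []"
proof -
  assume r: "reduced d" and ne: "d \<noteq> []" and n: "n \<ge> 1"
  obtain c s where d: "d = c @ s @ fg_neg c" and s: "s \<noteq> []" "reduced (s @ s)"
    using cyc_decomp[OF r ne] by blast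
  have ps: "reduced (pw s n)" "pw s n \<noteq> []" "hd (pw s n) = hd s" "last (pw s n) = last s"
    using pw_reduced[OF s(2) s(1) n] pw_ne[OF s(1) n] pw_hd[OF s(1) n] pw_last[OF s(1) n] by auto
  have "reduced (c @ s @ fg_neg c)" using r d by simp
  then have "reduced (c @ pw s n @ fg_neg c)"
    using ps s(1) by (simp add: reduced_append)
  then have "rd (c @ pw s n @ fg_neg c) = c @ pw s n @ fg_neg c" by (rule rd_reduced)
  then show ?thesis using rd_pw_conj[OF n, of c s] d ps(2) by simp
qed

definition shift :: "'a fword \<Rightarrow> ('a fword \<Rightarrow> int) \<Rightarrow> 'a fword \<Rightarrow> int" where
  "shift c f = (\<lambda>r. f (rd (fg_neg c @ r)))"

definition rdinv :: "('a fword \<Rightarrow> int) \<Rightarrow> bool" where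
  "rdinv f \<longleftrightarrow> (\<forall>r. f (rd r) = f r)"

definition ee :: "'a \<Rightarrow> 'a \<times> bool \<Rightarrow> 'a fword \<Rightarrow> int" where
  "ee g x = (\<lambda>r. if fst x = g \<and> rd r = [] then (if snd x then 1 else -1) else 0)"

definition rho :: "'a set \<Rightarrow> 'a fword \<Rightarrow> 'a fword" where
  "rho X w = rd (restrict_word X w)"

fun phi :: "'a set \<Rightarrow> 'a \<Rightarrow> 'a fword \<Rightarrow> 'a fword \<Rightarrow> int" where
  "phi X g [] = (\<lambda>r. 0)"
| "phi X g (x # w) = (\<lambda>r. ee g x r + shift (rho X [x]) (phi X g w) r)"

lemma rdinv_shift: "rdinv (shift c f)"
  unfolding rdinv_def shift_def by (simp add: rd_append_rd)

lemma rdinv_add: "rdinv f \<Longrightarrow> rdinv h \<Longrightarrow> rdinv (\<lambda>r. f r + h r)"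
  unfolding rdinv_def by simp

lemma rdinv_ee: "rdinv (ee g x)"
  unfolding rdinv_def ee_def by simp

lemma rdinv_phi: "rdinv (phi X g w)"
proof (induction w)
  case Nil then show ?case by (simp add: rdinv_def)
next
  case (Cons x w)
  show ?case by (simp only: phi.simps) (intro rdinv_add rdinv_ee rdinv_shift)
qed

lemma shift_Nil: "rdinv f \<Longrightarrow> shift [] f = f"
  unfolding rdinv_def shift_def by simp

lemma shift_rd: "shift (rd c) f = shift c f"
proof -
  have "rd (fg_neg (rd c) @ r) = rd (fg_neg c @ r)" for r
    by (metis rd_rd_append rd_neg_rd)
  then show ?thesis unfolding shift_def by simp
qed

lemma shift_shift: "shift c (shift d f) = shift (c @ d) f"
  unfolding shift_def by (simp add: rd_append_rd)

lemma shift_zero[simp]: "shift c (\<lambda>r. 0) = (\<lambda>r. 0)"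
  unfolding shift_def by simp

lemma rho_Nil[simp]: "rho X [] = []" by (simp add: rho_def)

lemma rho_append: "rho X (u @ v) = rd (rho X u @ rho X v)"
  unfolding rho_def by (simp add: rd_append[of "restrict_word X u"])

lemma phi_append: "phi X g (u @ v) = (\<lambda>r. phi X g u r + shift (rho X u) (phi X g v) r)"
proof (induction u)
  case Nil then show ?case by (simp add: shift_Nil rdinv_phi)
next
  case (Cons x u)
  have "phi X g ((x # u) @ v) = (\<lambda>r. ee g x r + shift (rho X [x]) (\<lambda>r. phi X g u r + shift (rho X u) (phi X g v) r) r)"
    using Cons by simp
  also have "\<dots> = (\<lambda>r. ee g x r + shift (rho X [x]) (phi X g u) r + shift (rho X [x] @ rho X u) (phi X g v) r)"
    by (simp add: shift_def rd_append_rd add.assoc)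
  also have "shift (rho X [x] @ rho X u) (phi X g v) = shift (rho X (x # u)) (phi X g v)"
    using shift_rd[of "rho X [x] @ rho X u"] rho_append[of X "[x]" u] by simp
  finally show ?case by simp
qed

lemma phi_append_zero: "rho X u = [] \<Longrightarrow> phi X g (u @ v) = (\<lambda>r. phi X g u r + phi X g v r)"
  by (simp add: phi_append shift_Nil rdinv_phi)

lemma phi_cancel: "g \<in> X \<Longrightarrow> phi X g (p # linv p # ys) = phi X g ys"
proof (cases "fst p = g")
  case True
  assume gX: "g \<in> X"
  then have "rho X [p] = []" "rho X [linv p] = []" using True by (simp_all add: rho_def restrict_Cons)
  then show ?thesis using True
    by (auto simp: shift_def ee_def rdinv_phi[unfolded rdinv_def])
next
  case False
  have "rho X [p] @ rho X [linv p] = rho X [p] @ rho X [linv p]" ..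
  have r: "rd (rho X [p] @ rho X [linv p]) = []"
    using rho_append[of X "[p]" "[linv p]"] by (simp add: rho_def restrict_Cons rd_cancel)
  have "phi X g (p # linv p # ys) = shift (rho X [p]) (shift (rho X [linv p]) (phi X g ys))"
    using False by (simp add: ee_def shift_def)
  also have "\<dots> = shift (rd (rho X [p] @ rho X [linv p])) (phi X g ys)"
    by (simp add: shift_shift shift_rd)
  also have "\<dots> = phi X g ys" using r by (simp add: shift_Nil rdinv_phi)
  finally show ?thesis .
qed

lemma phi_cancel1: "cancel1 w w' \<Longrightarrow> g \<in> X \<Longrightarrow> phi X g w = phi X g w'"
proof (induction rule: cancel1.induct)
  case (1 xs x b ys)
  have "phi X g ([(x, b), (x, \<not> b)] @ ys) = phi X g ys"
    using phi_cancel[OF 1(1), of "(x,b)" ys] by (simp add: linv_def)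
  then show ?case by (simp only: phi_append)
qed

lemma phi_cancels: "cancel1\<^sup>*\<^sup>* w w' \<Longrightarrow> g \<in> X \<Longrightarrow> phi X g w = phi X g w'"
  by (induction rule: rtranclp_induct) (auto dest: phi_cancel1)

lemma phi_rd: "g \<in> X \<Longrightarrow> phi X g (rd w) = phi X g w"
  using phi_cancels[OF cancels_to_rd] by metis

lemma phi_zero: "g \<in> X \<Longrightarrow> rd w = [] \<Longrightarrow> phi X g w = (\<lambda>r. 0)"
  using phi_rd[of g X w] by simp

lemma phi_noletter: "(\<forall>x\<in>set w. fst x \<noteq> g) \<Longrightarrow> phi X g w = (\<lambda>r. 0)"
  by (induction w) (auto simp: ee_def)

lemma phi_restrict: "P \<subseteq> X \<Longrightarrow> g \<notin> P \<Longrightarrow> phi X g (restrict_word P w) = phi X g w"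
proof (induction w)
  case Nil then show ?case by simp
next
  case (Cons x w)
  show ?case
  proof (cases "fst x \<in> P")
    case True
    then have "rho X [x] = []" "fst x \<noteq> g" using Cons.prems by (auto simp: rho_def restrict_Cons)
    then show ?thesis using True Cons by (simp add: restrict_Cons ee_def shift_Nil rdinv_phi)
  next
    case False
    then show ?thesis using Cons by (simp add: restrict_Cons)
  qed
qed

lemma rho_neg: "rho X (fg_neg w) = rd (fg_neg (rho X w))"
  unfolding rho_def by (simp add: restrict_neg rd_neg_rd)

lemma phi_neg: "g \<in> X \<Longrightarrow> rho X w = [] \<Longrightarrow> phi X g (fg_neg w) = (\<lambda>r. - phi X g w r)"
proof -
  assume g: "g \<in> X" and w: "rho X w = []"
  have "phi X g (w @ fg_neg w) = (\<lambda>r. 0)" using phi_zero[OF g] by simp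
  then have "(\<lambda>r. phi X g w r + phi X g (fg_neg w) r) = (\<lambda>r. 0)"
    using w by (simp add: phi_append shift_Nil rdinv_phi)
  then show ?thesis by (metis add_eq_0_iff)
qed

lemma rho_comm_zero: "rho X u = [] \<Longrightarrow> rho X (fg_comm u v) = []"
  unfolding rho_def by (simp add: restrict_comm zero_comm)

lemma phi_comm: "g \<in> X \<Longrightarrow> rho X u = [] \<Longrightarrow>
   phi X g (fg_comm u v) = (\<lambda>r. phi X g u r - shift (rho X v) (phi X g u) r)"
proof -
  assume g: "g \<in> X" and u: "rho X u = []"
  have nu: "rho X (fg_neg u) = []" using u by (simp add: rho_neg)
  have A: "phi X g (fg_neg u) = (\<lambda>r. - phi X g u r)" by (rule phi_neg[OF g u])
  have B: "(\<lambda>r. phi X g v r + shift (rho X v) (phi X g (fg_neg v)) r) = (\<lambda>r. 0)"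
    using phi_zero[OF g, of "v @ fg_neg v"] by (simp add: phi_append)
  have C1: "phi X g (fg_comm u v) = (\<lambda>r. phi X g u r + phi X g (v @ fg_neg u @ fg_neg v) r)"
    unfolding fg_comm_def by (rule phi_append_zero[OF u])
  have C2: "phi X g (v @ fg_neg u @ fg_neg v) = (\<lambda>r. phi X g v r + shift (rho X v) (phi X g (fg_neg u @ fg_neg v)) r)"
    by (rule phi_append)
  have C3: "phi X g (fg_neg u @ fg_neg v) = (\<lambda>r. - phi X g u r + phi X g (fg_neg v) r)"
    using phi_append_zero[OF nu] A by simp
  have B': "phi X g v r + shift (rho X v) (phi X g (fg_neg v)) r = 0" for r
    using fun_cong[OF B, of r] by simp
  show ?thesis
  proof
    fix r
    show "phi X g (fg_comm u v) r = phi X g u r - shift (rho X v) (phi X g u) r"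
      using B'[of r] unfolding C1 C2 C3 by (simp add: shift_def)
  qed
qed

lemma phi_comm2: "g \<in> X \<Longrightarrow> rho X u = [] \<Longrightarrow>
   phi X g (fg_comm v u) = (\<lambda>r. shift (rho X v) (phi X g u) r - phi X g u r)"
proof -
  assume g: "g \<in> X" and u: "rho X u = []"
  have "fg_comm v u = fg_neg (fg_comm u v)" by (simp add: fg_comm_def)
  then show ?thesis using phi_neg[OF g rho_comm_zero[OF u, of v]] phi_comm[OF g u, of v] by simp
qed

definition supp :: "('a fword \<Rightarrow> int) \<Rightarrow> 'a fword set" where
  "supp f = {r. reduced r \<and> f r \<noteq> 0}"

lemma supp_shift: "supp (shift c f) \<subseteq> (\<lambda>r'. rd (c @ r')) ` supp f"
proof
  fix r assume "r \<in> supp (shift c f)"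
  then have r: "reduced r" "f (rd (fg_neg c @ r)) \<noteq> 0" by (auto simp: supp_def shift_def)
  have "rd (c @ rd (fg_neg c @ r)) = r" using r(1) by (simp add: rd_append_rd rd_cancel_left2 rd_reduced)
  moreover have "rd (fg_neg c @ r) \<in> supp f" using r by (simp add: supp_def reduced_rd)
  ultimately show "r \<in> (\<lambda>r'. rd (c @ r')) ` supp f" by force
qed

lemma finite_supp_phi: "finite (supp (phi X g w))"
proof (induction w)
  case Nil then show ?case by (simp add: supp_def)
next
  case (Cons x w)
  have s1: "supp (phi X g (x # w)) \<subseteq> {[]} \<union> supp (shift (rho X [x]) (phi X g w))"
  proof
    fix r assume r: "r \<in> supp (phi X g (x # w))"
    show "r \<in> {[]} \<union> supp (shift (rho X [x]) (phi X g w))"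
    proof (cases "r = []")
      case False
      have "rd r = r" using r by (simp add: supp_def rd_reduced)
      then have "ee g x r = 0" using False by (simp add: ee_def)
      then show ?thesis using r by (simp add: supp_def)
    qed simp
  qed
  have s2: "{[]} \<union> supp (shift (rho X [x]) (phi X g w)) \<subseteq> {[]} \<union> (\<lambda>r'. rd (rho X [x] @ r')) ` supp (phi X g w)"
    using supp_shift by blast
  have fin: "finite ({[]} \<union> (\<lambda>r'. rd (rho X [x] @ r')) ` supp (phi X g w))"
    using Cons by simp
  show ?case using finite_subset[OF subset_trans[OF s1 s2] fin] .
qed

lemma nondeg:
  assumes rf: "rdinv f" and fin: "finite (supp f)" and fnz: "f \<noteq> (\<lambda>r. 0)" and c: "rd c \<noteq> []"
  shows "(\<lambda>r. f r - shift c f r) \<noteq> (\<lambda>r. 0)"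
proof
  assume "(\<lambda>r. f r - shift c f r) = (\<lambda>r. 0)"
  then have eq: "f r = shift c f r" for r by (metis eq_iff_diff_eq_0)
  define d where "d = rd (fg_neg c)"
  have dr: "reduced d" unfolding d_def by (rule reduced_rd)
  have dne: "d \<noteq> []" unfolding d_def using c by (metis rd_neg_rd fg_neg_neg rd_neg_zero)
  define m where "m r = rd (d @ r)" for r
  have fm: "f r = f (m r)" for r
    using eq[of r] unfolding shift_def m_def d_def by (simp add: rd_rd_append)
  obtain r0 where "f r0 \<noteq> 0" using fnz by auto
  then have r0': "f (rd r0) \<noteq> 0" using rf by (simp add: rdinv_def)
  define r1 where "r1 = rd r0"
  have r0: "f r1 \<noteq> 0" "reduced r1" using r0' by (simp_all add: r1_def reduced_rd)
  define s where "s n = (m ^^ n) r1" for n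
  have s_eq: "s n = rd (pw d n @ r1)" for n
  proof (induction n)
    case 0 then show ?case using r0(2) by (simp add: s_def rd_reduced)
  next
    case (Suc n)
    have "s (Suc n) = m (s n)" by (simp add: s_def)
    also have "\<dots> = rd (d @ rd (pw d n @ r1))" using Suc by (simp add: m_def)
    finally show ?case by (simp add: rd_append_rd pw_Suc)
  qed
  have s_supp: "s n \<in> supp f" for n
  proof -
    have "f (s n) = f r1"
      by (induction n) (simp_all add: s_def fm[symmetric])
    moreover have "reduced (s n)" by (simp add: s_eq reduced_rd)
    ultimately show ?thesis using r0 by (simp add: supp_def)
  qed
  have "\<not> inj s"
  proof
    assume "inj s"
    then have "infinite (range s)" by (rule range_inj_infinite)
    moreover have "range s \<subseteq> supp f" using s_supp by auto
    ultimately show False using fin finite_subset by blast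
  qed
  then obtain i j where ij: "s i = s j" "i < j"
    unfolding inj_def by (metis linorder_neqE_nat)
  define e where "e = j - i"
  have e: "e \<ge> 1" "j = e + i" using ij by (auto simp: e_def)
  define x where "x = s i"
  have "rd (pw d e @ x) = x"
  proof -
    have "s j = rd (pw d e @ pw d i @ r1)" using s_eq[of j] e by (simp add: pw_add)
    also have "\<dots> = rd (pw d e @ s i)" by (simp add: s_eq rd_append_rd)
    finally show ?thesis using ij unfolding x_def by simp
  qed
  then have "rd (rd (pw d e @ x) @ fg_neg x) = rd (x @ fg_neg x)" by simp
  then have "rd (pw d e) = []"
    by (metis append_assoc rd_rd_append rd_append_rd rd_inverse append_Nil2)
  then show False using torsion_free[OF dr dne e(1)] by simp
qed

lemma ct_leaves_ne: "ct_leaves t \<noteq> []"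
  by (induction t) auto

lemma chain_lemma:
  assumes "finite U" "\<not> Q P" "Q (P \<union> U)"
  shows "\<exists>P' g. P \<subseteq> P' \<and> \<not> Q P' \<and> Q (insert g P')"
  using assms
proof (induction U rule: finite_induct)
  case empty then show ?case by simp
next
  case (insert x F)
  show ?case
  proof (cases "Q (P \<union> F)")
    case True then show ?thesis using insert by blast
  next
    case False
    have "insert x (P \<union> F) = P \<union> insert x F" by blast
    then show ?thesis using False insert.prems by (intro exI[of _ "P \<union> F"] exI[of _ x]) auto
  qed
qed

lemma tree_zero:
  assumes H1: "\<And>j P. j \<in> J \<Longrightarrow> rd (restrict_word P (D j)) = [] \<longleftrightarrow> dead P j"
  shows "set (ct_leaves t) \<subseteq> J \<Longrightarrow> (\<exists>j\<in>set (ct_leaves t). dead P j) \<Longrightarrow>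
         rd (restrict_word P (ct_value D t)) = []"
proof (induction t)
  case (Leaf x) then show ?case using H1 by auto
next
  case (Node t1 t2)
  then have "rd (restrict_word P (ct_value D t1)) = [] \<or> rd (restrict_word P (ct_value D t2)) = []"
    by auto
  then show ?case by (auto simp: restrict_comm intro: zero_comm zero_comm2)
qed

lemma nondeg2:
  assumes "rdinv f" "finite (supp f)" "f \<noteq> (\<lambda>r. 0)" "rd c \<noteq> []"
  shows "(\<lambda>r. shift c f r - f r) \<noteq> (\<lambda>r. 0)"
proof
  assume "(\<lambda>r. shift c f r - f r) = (\<lambda>r. 0)"
  then have "(\<lambda>r. f r - shift c f r) = (\<lambda>r. 0)"
    by (metis (no_types, lifting) eq_iff_diff_eq_0)
  then show False using nondeg[OF assms] by simp
qed

lemma phi_nz_restrict: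
  assumes "phi (insert g P) g w \<noteq> (\<lambda>r. 0)" "g \<notin> P"
  shows "rd (restrict_word P w) \<noteq> []"
proof
  assume "rd (restrict_word P w) = []"
  then have "phi (insert g P) g (restrict_word P w) = (\<lambda>r. 0)" by (simp add: phi_zero)
  then show False using assms phi_restrict[of P "insert g P" g w] by auto
qed

lemma tree_AB:
  fixes D :: "nat \<Rightarrow> 'a fword" and dead :: "'a set \<Rightarrow> nat \<Rightarrow> bool"
  assumes H1: "\<And>j P. j \<in> J \<Longrightarrow> rd (restrict_word P (D j)) = [] \<longleftrightarrow> dead P j"
  and H2: "\<And>j P g. j \<in> J \<Longrightarrow> \<not> dead P j \<Longrightarrow> dead (insert g P) j \<Longrightarrow>
             phi (insert g P) g (D j) \<noteq> (\<lambda>r. 0)"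
  and H3: "\<And>j1 j2 P g. j1 \<in> J \<Longrightarrow> j2 \<in> J \<Longrightarrow> \<not> dead P j1 \<Longrightarrow> dead (insert g P) j1 \<Longrightarrow>
             \<not> dead P j2 \<Longrightarrow> dead (insert g P) j2 \<Longrightarrow> j1 = j2"
  and H4: "\<And>j P. j \<in> J \<Longrightarrow> dead (P \<union> V) j"
  and fV: "finite V"
  shows "set (ct_leaves t) \<subseteq> J \<Longrightarrow> distinct (ct_leaves t) \<Longrightarrow>
     (\<forall>P. (\<forall>j\<in>set (ct_leaves t). \<not> dead P j) \<longrightarrow> rd (restrict_word P (ct_value D t)) \<noteq> []) \<and>
     (\<forall>P g. (\<forall>j\<in>set (ct_leaves t). \<not> dead P j) \<longrightarrow> (\<exists>j\<in>set (ct_leaves t). dead (insert g P) j)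
        \<longrightarrow> phi (insert g P) g (ct_value D t) \<noteq> (\<lambda>r. 0))"
proof (induction t)
  case (Leaf x)
  then show ?case using H1 H2 by auto
next
  case (Node t1 t2)
  let ?l1 = "set (ct_leaves t1)" and ?l2 = "set (ct_leaves t2)"
  have sub: "?l1 \<subseteq> J" "?l2 \<subseteq> J" and dis: "distinct (ct_leaves t1)" "distinct (ct_leaves t2)"
    and disj: "?l1 \<inter> ?l2 = {}"
    using Node.prems by auto
  note IH1 = Node.IH(1)[OF sub(1) dis(1)] and IH2 = Node.IH(2)[OF sub(2) dis(2)]
  have B: "phi (insert g P) g (ct_value D (Node t1 t2)) \<noteq> (\<lambda>r. 0)"
    if nd: "\<forall>j\<in>set (ct_leaves (Node t1 t2)). \<not> dead P j"
    and dd: "\<exists>j\<in>set (ct_leaves (Node t1 t2)). dead (insert g P) j" for P g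
  proof -
    let ?X = "insert g P"
    obtain j0 where j0: "j0 \<in> ?l1 \<union> ?l2" "dead ?X j0" using dd by auto
    have uniq: "j = j0" if "j \<in> ?l1 \<union> ?l2" "dead ?X j" for j
      using H3[of j j0 P g] that j0 nd sub by auto
    have gX: "g \<in> ?X" by simp
    show ?thesis
    proof (cases "j0 \<in> ?l1")
      case True
      have n2: "\<forall>j\<in>?l2. \<not> dead ?X j" using uniq disj True by blast
      have nd1: "\<forall>j\<in>?l1. \<not> dead P j" using nd by simp
      have p1: "phi ?X g (ct_value D t1) \<noteq> (\<lambda>r. 0)"
        using IH1 nd1 True j0(2) by blast
      have z1: "rho ?X (ct_value D t1) = []"
        unfolding rho_def using tree_zero[where J=J and D=D and dead=dead, OF H1 sub(1)] True j0(2) by blast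
      have nz2: "rd (rho ?X (ct_value D t2)) \<noteq> []"
        using IH2 n2 by (simp add: rho_def)
      show ?thesis
        using nondeg[OF rdinv_phi finite_supp_phi p1 nz2] phi_comm[OF gX z1] by simp
    next
      case False
      then have T2: "j0 \<in> ?l2" using j0 by blast
      have n1: "\<forall>j\<in>?l1. \<not> dead ?X j" using uniq disj T2 by blast
      have nd2: "\<forall>j\<in>?l2. \<not> dead P j" using nd by simp
      have p2: "phi ?X g (ct_value D t2) \<noteq> (\<lambda>r. 0)"
        using IH2 nd2 T2 j0(2) by blast
      have z2: "rho ?X (ct_value D t2) = []"
        unfolding rho_def using tree_zero[where J=J and D=D and dead=dead, OF H1 sub(2)] T2 j0(2) by blast
      have nz1: "rd (rho ?X (ct_value D t1)) \<noteq> []"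
        using IH1 n1 by (simp add: rho_def)
      show ?thesis
        using nondeg2[OF rdinv_phi finite_supp_phi p2 nz1] phi_comm2[OF gX z2] by simp
    qed
  qed
  have A: "rd (restrict_word P (ct_value D (Node t1 t2))) \<noteq> []"
    if nd: "\<forall>j\<in>set (ct_leaves (Node t1 t2)). \<not> dead P j" for P
  proof -
    let ?Q = "\<lambda>P. \<exists>j\<in>set (ct_leaves (Node t1 t2)). dead P j"
    have ne: "ct_leaves (Node t1 t2) \<noteq> []" by (rule ct_leaves_ne)
    obtain j1 where j1: "j1 \<in> set (ct_leaves (Node t1 t2))" using ne by (meson list.set_sel(1))
    then have "j1 \<in> J" using Node.prems(1) by (meson subsetD)
    then have dj1: "dead (P \<union> V) j1" by (rule H4)
    have QV: "?Q (P \<union> V)" using dj1 j1 by auto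
    have nQ: "\<not> ?Q P" using nd by simp
    obtain P' g where P': "P \<subseteq> P'" "\<not> ?Q P'" "?Q (insert g P')"
      using chain_lemma[where Q="?Q", OF fV nQ QV] by blast
    have gP: "g \<notin> P'" using P'(2,3) by (metis insert_absorb)
    have nd': "\<forall>j\<in>set (ct_leaves (Node t1 t2)). \<not> dead P' j" using P'(2) by simp
    have "phi (insert g P') g (ct_value D (Node t1 t2)) \<noteq> (\<lambda>r. 0)"
      by (rule B[OF nd' P'(3)])
    then have "rd (restrict_word P' (ct_value D (Node t1 t2))) \<noteq> []"
      by (rule phi_nz_restrict[OF _ gP])
    moreover have "restrict_word P' (restrict_word P (ct_value D (Node t1 t2))) =
                   restrict_word P' (ct_value D (Node t1 t2))"
    proof -
      have "P' \<union> P = P'" using P'(1) by blast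
      then show ?thesis by (simp only: restrict_restrict)
    qed
    ultimately show ?thesis using zero_restrict[of "restrict_word P (ct_value D (Node t1 t2))" P'] by auto
  qed
  show ?case using A B by blast
qed

definition Props :: "'a set \<Rightarrow> nat \<Rightarrow> 'a fword \<Rightarrow> bool" where
  "Props V k h \<longleftrightarrow> (\<forall>x\<in>set h. fst x \<in> V) \<and>
     (\<forall>P. rd (restrict_word P h) = [] \<longleftrightarrow> k \<le> card (P \<inter> V)) \<and>
     (\<forall>P g. rd (restrict_word P h) \<noteq> [] \<longrightarrow> rd (restrict_word (insert g P) h) = [] \<longrightarrow>
        phi (insert g P) g h \<noteq> (\<lambda>r. 0))"

lemma restrict_all: "(\<forall>x\<in>set v. fst x \<in> R) \<Longrightarrow> restrict_word R v = []"
  by (induction v) (auto simp: restrict_Cons)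

lemma restrict_letters: "(\<forall>x\<in>set v. fst x \<in> R) \<Longrightarrow> (\<forall>x\<in>set (restrict_word P v). fst x \<in> R)"
  by (auto simp: restrict_word_def)

lemma zero_concat:
  assumes u: "\<forall>x\<in>set u. fst x \<in> L" and v: "\<forall>x\<in>set v. fst x \<in> R" and d: "L \<inter> R = {}"
  shows "rd (u @ v) = [] \<longleftrightarrow> rd u = [] \<and> rd v = []"
proof
  assume z: "rd (u @ v) = []"
  have "restrict_word R u = u" using u d by (intro restrict_id) blast
  moreover have "restrict_word R v = []" using v by (rule restrict_all)
  ultimately have "rd u = []" using zero_restrict[OF z, of R] by simp
  moreover have "restrict_word L v = v" using v d by (intro restrict_id) blast
  moreover have "restrict_word L u = []" using u by (rule restrict_all)
  ultimately show "rd u = [] \<and> rd v = []" using zero_restrict[OF z, of L] by simp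
next
  assume "rd u = [] \<and> rd v = []"
  then show "rd (u @ v) = []" using rd_append[of u v] by simp
qed

lemma zero_concat_restrict:
  assumes u: "\<forall>x\<in>set u. fst x \<in> L" and v: "\<forall>x\<in>set v. fst x \<in> R" and d: "L \<inter> R = {}"
  shows "rd (restrict_word P (u @ v)) = [] \<longleftrightarrow> rd (restrict_word P u) = [] \<and> rd (restrict_word P v) = []"
  using zero_concat[OF restrict_letters[OF u] restrict_letters[OF v] d] by simp

lemma restrict_insert_nonletter: "(\<forall>x\<in>set u. fst x \<noteq> g) \<Longrightarrow> restrict_word (insert g P) u = restrict_word P u"
  by (induction u) (auto simp: restrict_Cons)

lemma concat_phi:
  assumes u: "\<forall>x\<in>set u. fst x \<in> L" and v: "\<forall>x\<in>set v. fst x \<in> R" and d: "L \<inter> R = {}"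
  and Mu: "\<forall>P g. rd (restrict_word P u) \<noteq> [] \<longrightarrow> rd (restrict_word (insert g P) u) = [] \<longrightarrow>
        phi (insert g P) g u \<noteq> (\<lambda>r. 0)"
  and Mv: "\<forall>P g. rd (restrict_word P v) \<noteq> [] \<longrightarrow> rd (restrict_word (insert g P) v) = [] \<longrightarrow>
        phi (insert g P) g v \<noteq> (\<lambda>r. 0)"
  and nz: "rd (restrict_word P (u @ v)) \<noteq> []" and z: "rd (restrict_word (insert g P) (u @ v)) = []"
  shows "phi (insert g P) g (u @ v) \<noteq> (\<lambda>r. 0)"
proof -
  let ?X = "insert g P"
  have zu: "rd (restrict_word ?X u) = []" and zv: "rd (restrict_word ?X v) = []"
    using z zero_concat_restrict[OF u v d] by auto
  have nzuv: "\<not> (rd (restrict_word P u) = [] \<and> rd (restrict_word P v) = [])"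
    using nz zero_concat_restrict[OF u v d] by auto
  show ?thesis
  proof (cases "g \<in> L")
    case False
    then have gu: "\<forall>x\<in>set u. fst x \<noteq> g" using u by auto
    then have "rd (restrict_word P u) = []" using zu restrict_insert_nonletter[OF gu] by simp
    then have "rd (restrict_word P v) \<noteq> []" using nzuv by simp
    then have pv: "phi ?X g v \<noteq> (\<lambda>r. 0)" using Mv zv by blast
    have "phi ?X g u = (\<lambda>r. 0)" by (rule phi_noletter[OF gu])
    moreover have "rho ?X u = []" using zu by (simp add: rho_def)
    ultimately have "phi ?X g (u @ v) = phi ?X g v" by (simp add: phi_append_zero)
    then show ?thesis using pv by simp
  next
    case True
    then have gv: "\<forall>x\<in>set v. fst x \<noteq> g" using v d by auto
    then have "rd (restrict_word P v) = []" using zv restrict_insert_nonletter[OF gv] by simp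
    then have "rd (restrict_word P u) \<noteq> []" using nzuv by simp
    then have pu: "phi ?X g u \<noteq> (\<lambda>r. 0)" using Mu zu by blast
    have "phi ?X g v = (\<lambda>r. 0)" by (rule phi_noletter[OF gv])
    then have "phi ?X g (u @ v) = phi ?X g u" by (simp add: phi_append)
    then show ?thesis using pu by simp
  qed
qed

lemma letters_neg: "\<forall>x\<in>set a. fst x \<in> W \<Longrightarrow> \<forall>x\<in>set (fg_neg a). fst x \<in> W"
  by (induction a) auto

lemma letters_comm: "\<forall>x\<in>set a. fst x \<in> W \<Longrightarrow> \<forall>x\<in>set b. fst x \<in> W \<Longrightarrow> \<forall>x\<in>set (fg_comm a b). fst x \<in> W"
proof -
  assume a: "\<forall>x\<in>set a. fst x \<in> W" and b: "\<forall>x\<in>set b. fst x \<in> W"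
  have "\<forall>x\<in>set (fg_neg a). fst x \<in> W" "\<forall>x\<in>set (fg_neg b). fst x \<in> W"
    using letters_neg a b by blast+
  then show ?thesis using a b unfolding fg_comm_def set_append ball_Un by blast
qed

lemma ct_letters: "(\<forall>j\<in>set (ct_leaves t). \<forall>x\<in>set (D j). fst x \<in> W) \<Longrightarrow> \<forall>x\<in>set (ct_value D t). fst x \<in> W"
proof (induction t)
  case (Leaf x) then show ?case by simp
next
  case (Node t1 t2)
  have "\<forall>x\<in>set (ct_value D t1). fst x \<in> W" "\<forall>x\<in>set (ct_value D t2). fst x \<in> W"
    using Node.IH Node.prems by (simp_all add: ball_Un)
  then show ?case using letters_comm[of "ct_value D t1" W "ct_value D t2"] by simp
qed

lemma props_base: "Props {v} 1 [(v, True)]"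
proof -
  have phi1: "phi (insert v P) v [(v, True)] [] = 1" for P
    by (simp add: ee_def shift_def)
  have r1: "restrict_word P [(v, True)] = (if v \<in> P then [] else [(v, True)])" for P
    by (simp add: restrict_word_def)
  have rd1: "rd [(v, True)] = [(v, True)]" by simp
  have c1: "card (P \<inter> {v}) = (if v \<in> P then 1 else 0)" for P
    by (cases "v \<in> P") auto
  have A: "\<forall>P. rd (restrict_word P [(v, True)]) = [] \<longleftrightarrow> 1 \<le> card (P \<inter> {v})"
    using r1 rd1 c1 by simp
  have B: "phi (insert g P) g [(v, True)] \<noteq> (\<lambda>r. 0)"
    if "rd (restrict_word P [(v, True)]) \<noteq> []" "rd (restrict_word (insert g P) [(v, True)]) = []" for P g
  proof -
    have "v \<notin> P" "v \<in> insert g P" using that r1 rd1 by (auto split: if_splits)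
    then have "g = v" by simp
    then show ?thesis using phi1[of P] by (metis zero_neq_one)
  qed
  show ?thesis unfolding Props_def using A B by simp
qed

lemma card_insert_Int:
  assumes "finite L" "g \<notin> P"
  shows "card (insert g P \<inter> L) = (if g \<in> L then card (P \<inter> L) + 1 else card (P \<inter> L))"
proof (cases "g \<in> L")
  case True
  then have "insert g P \<inter> L = insert g (P \<inter> L)" by blast
  moreover have "finite (P \<inter> L)" using assms(1) by simp
  ultimately show ?thesis using True assms(2) by simp
next
  case False
  then have "insert g P \<inter> L = P \<inter> L" by blast
  then show ?thesis using False by simp
qed

lemma props_split:
  fixes D :: "nat \<Rightarrow> 'a fword"
  assumes fL: "finite L" and fR: "finite R" and LR: "L \<inter> R = {}" and k1: "1 \<le> k"
  and IH: "\<forall>j. k - card R \<le> j \<and> j \<le> min k (card L) \<longrightarrow>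
         j = 0 \<and> hword R k (D j) \<and> Props R k (D j) \<or>
         0 < j \<and> j < k \<and>
         (\<exists>a b. (hword L j a \<and> Props L j a) \<and> (hword R (k - j) b \<and> Props R (k - j) b) \<and> D j = a @ b) \<or>
         j = k \<and> hword L k (D j) \<and> Props L k (D j)"
  and mt: "mset (ct_leaves t) = mset [k - card R..<min k (card L) + 1]"
  shows "Props (L \<union> R) k (ct_value D t)"
proof -
  define J where "J = {k - card R..<min k (card L) + 1}"
  define dead where "dead P j \<longleftrightarrow> j \<le> card (P \<inter> L) \<and> k - j \<le> card (P \<inter> R)" for P j
  have "set (ct_leaves t) = set [k - card R..<min k (card L) + 1]" by (rule mset_eq_setD[OF mt])
  then have setl: "set (ct_leaves t) = J" by (simp only: set_upt J_def)
  have dist: "distinct (ct_leaves t)" using mset_eq_imp_distinct_iff[OF mt] by simp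
  have inJ: "k - card R \<le> j \<and> j \<le> min k (card L)" if "j \<in> J" for j
    using that unfolding J_def by auto
  have LL: "(\<forall>x\<in>set (D j). fst x \<in> L \<union> R) \<and> (\<forall>P. rd (restrict_word P (D j)) = [] \<longleftrightarrow> dead P j) \<and>
      (\<forall>P g. rd (restrict_word P (D j)) \<noteq> [] \<longrightarrow> rd (restrict_word (insert g P) (D j)) = [] \<longrightarrow>
         phi (insert g P) g (D j) \<noteq> (\<lambda>r. 0))" if jJ: "j \<in> J" for j
  proof -
    have cases: "j = 0 \<and> Props R k (D j) \<or>
         0 < j \<and> j < k \<and> (\<exists>a b. Props L j a \<and> Props R (k - j) b \<and> D j = a @ b) \<or>
         j = k \<and> Props L k (D j)"
      using IH inJ[OF jJ] by blast
    then show ?thesis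
    proof (elim disjE conjE exE)
      assume j0: "j = 0" and p: "Props R k (D j)"
      show ?thesis using p unfolding Props_def dead_def j0 by auto
    next
      assume jk: "j = k" and p: "Props L k (D j)"
      show ?thesis using p unfolding Props_def dead_def jk by auto
    next
      fix a b assume pa: "Props L j a" and pb: "Props R (k - j) b" and dj: "D j = a @ b"
      have la: "\<forall>x\<in>set a. fst x \<in> L" and lb: "\<forall>x\<in>set b. fst x \<in> R"
        using pa pb unfolding Props_def by auto
      have za: "\<forall>P. rd (restrict_word P a) = [] \<longleftrightarrow> j \<le> card (P \<inter> L)"
        and zb: "\<forall>P. rd (restrict_word P b) = [] \<longleftrightarrow> k - j \<le> card (P \<inter> R)"
        using pa pb unfolding Props_def by auto
      have ma: "\<forall>P g. rd (restrict_word P a) \<noteq> [] \<longrightarrow> rd (restrict_word (insert g P) a) = [] \<longrightarrow>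
        phi (insert g P) g a \<noteq> (\<lambda>r. 0)"
        and mb: "\<forall>P g. rd (restrict_word P b) \<noteq> [] \<longrightarrow> rd (restrict_word (insert g P) b) = [] \<longrightarrow>
        phi (insert g P) g b \<noteq> (\<lambda>r. 0)"
        using pa pb unfolding Props_def by auto
      have "\<forall>x\<in>set (D j). fst x \<in> L \<union> R" using la lb dj by auto
      moreover have "\<forall>P. rd (restrict_word P (D j)) = [] \<longleftrightarrow> dead P j"
        using zero_concat_restrict[OF la lb LR] za zb dj unfolding dead_def by simp
      moreover have "\<forall>P g. rd (restrict_word P (D j)) \<noteq> [] \<longrightarrow> rd (restrict_word (insert g P) (D j)) = [] \<longrightarrow>
         phi (insert g P) g (D j) \<noteq> (\<lambda>r. 0)"
        using concat_phi[OF la lb LR ma mb] dj by simp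
      ultimately show ?thesis by blast
    qed
  qed
  have H1: "rd (restrict_word P (D j)) = [] \<longleftrightarrow> dead P j" if "j \<in> J" for j P
    using LL[OF that] by blast
  have H2: "phi (insert g P) g (D j) \<noteq> (\<lambda>r. 0)"
    if "j \<in> J" "\<not> dead P j" "dead (insert g P) j" for j P g
    using LL[OF that(1)] that(2,3) by blast
  have H3: "j1 = j2" if "j1 \<in> J" "j2 \<in> J" "\<not> dead P j1" "dead (insert g P) j1"
      "\<not> dead P j2" "dead (insert g P) j2" for j1 j2 P g
  proof -
    have gP: "g \<notin> P" using that(3,4) by (metis insert_absorb)
    have jk: "j1 \<le> k" "j2 \<le> k" using inJ that(1,2) by auto
    note cL = card_insert_Int[OF fL gP] and cR = card_insert_Int[OF fR gP]
    show ?thesis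
    proof (cases "g \<in> L")
      case True
      then have "g \<notin> R" using LR by blast
      then show ?thesis using that True cL cR unfolding dead_def by simp
    next
      case False
      show ?thesis
      proof (cases "g \<in> R")
        case True
        then show ?thesis using that False cL cR jk unfolding dead_def by simp arith
      next
        case False2: False
        then show ?thesis using that False cL cR unfolding dead_def by simp
      qed
    qed
  qed
  have H4: "dead (P \<union> (L \<union> R)) j" if "j \<in> J" for j P
  proof -
    have "(P \<union> (L \<union> R)) \<inter> L = L" "(P \<union> (L \<union> R)) \<inter> R = R" by blast+
    then show ?thesis using inJ[OF that] unfolding dead_def by auto
  qed
  have fV: "finite (L \<union> R)" using fL fR by simp
  note TAB = tree_AB[where J=J and D=D and dead=dead and V="L \<union> R" and t=t, OF H1 H2 H3 H4 fV]
  have A: "\<forall>P. (\<forall>j\<in>J. \<not> dead P j) \<longrightarrow> rd (restrict_word P (ct_value D t)) \<noteq> []"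
   and B: "\<forall>P g. (\<forall>j\<in>J. \<not> dead P j) \<longrightarrow> (\<exists>j\<in>J. dead (insert g P) j)
        \<longrightarrow> phi (insert g P) g (ct_value D t) \<noteq> (\<lambda>r. 0)"
    using TAB setl dist by auto
  have Z: "rd (restrict_word P (ct_value D t)) = []" if "\<exists>j\<in>J. dead P j" for P
    using tree_zero[where J=J and D=D and dead=dead, OF H1, of t P] setl that by auto
  have cardV: "card (P \<inter> (L \<union> R)) = card (P \<inter> L) + card (P \<inter> R)" for P
  proof -
    have "P \<inter> (L \<union> R) = (P \<inter> L) \<union> (P \<inter> R)" by blast
    moreover have "(P \<inter> L) \<inter> (P \<inter> R) = {}" using LR by blast
    ultimately show ?thesis using fL fR by (simp add: card_Un_disjoint)
  qed
  have M1: "rd (restrict_word P (ct_value D t)) = [] \<longleftrightarrow> k \<le> card (P \<inter> (L \<union> R))" for P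
  proof
    assume z: "rd (restrict_word P (ct_value D t)) = []"
    then obtain j where "j \<in> J" "dead P j" using A by blast
    then show "k \<le> card (P \<inter> (L \<union> R))" unfolding cardV dead_def by arith
  next
    assume kc: "k \<le> card (P \<inter> (L \<union> R))"
    define j where "j = min (card (P \<inter> L)) k"
    have "card (P \<inter> L) \<le> card L" using fL by (simp add: card_mono)
    moreover have "card (P \<inter> R) \<le> card R" using fR by (simp add: card_mono)
    ultimately have "j \<in> J" "dead P j" using kc unfolding cardV J_def dead_def j_def by auto
    then show "rd (restrict_word P (ct_value D t)) = []" using Z by blast
  qed
  have M2: "phi (insert g P) g (ct_value D t) \<noteq> (\<lambda>r. 0)"
    if "rd (restrict_word P (ct_value D t)) \<noteq> []" "rd (restrict_word (insert g P) (ct_value D t)) = []" for P g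
  proof -
    have "\<forall>j\<in>J. \<not> dead P j" using that(1) Z by blast
    moreover have "\<exists>j\<in>J. dead (insert g P) j" using that(2) A by blast
    ultimately show ?thesis using B by blast
  qed
  have M3: "\<forall>x\<in>set (ct_value D t). fst x \<in> L \<union> R"
    using ct_letters[of t D "L \<union> R"] LL setl by blast
  show ?thesis unfolding Props_def using M1 M2 M3 by blast
qed

lemma hword_props: "hword V k h \<Longrightarrow> Props V k h"
proof (induction rule: hword.induct)
  case (base v) then show ?case by (rule props_base)
next
  case (split L R k D t)
  show ?case by (rule props_split[OF split.hyps(1,2,5,6) split.IH split.hyps(8)])
qed

theorem theorem2:
  fixes V :: "'a set" and k :: nat and h :: "'a fword"
  assumes "finite V" and "V \<noteq> {}" and "1 \<le> k" and "k \<le> card V"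
    and "hword V k h"
  shows "\<forall>S \<subseteq> V. fg_is_zero (restrict_word S h) \<longleftrightarrow> k \<le> card S"
proof (intro allI impI)
  fix S assume S: "S \<subseteq> V"
  have "Props V k h" using assms(5) by (rule hword_props)
  then have "rd (restrict_word S h) = [] \<longleftrightarrow> k \<le> card (S \<inter> V)" unfolding Props_def by blast
  moreover have "S \<inter> V = S" using S by blast
  ultimately show "fg_is_zero (restrict_word S h) \<longleftrightarrow> k \<le> card S" by (simp add: zero_iff)
qed

end
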